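(* Let $a_0,a_1,a_2,a_3\in\mathbb{R}$ and consider the monic binary quartic form $$f(x,y)=x^4+a_3x^3y+a_2x^2y^2+a_1xy^3+a_0y^4 .$$ Let $$b_1=\tfrac14\,(4a_0-a_2^2-a_1a_3),\qquad b_2=\tfrac{a_2}{2},\qquad \lambda_0=\frac{4b_2+2\sqrt{3b_1+4b_2^2}}{3}.$$ Then $f$ is positive semi-definite if and only if $\lambda_0$ is a real number and the $3\times 3$ real symmetric matrix $$\mathbf{M}_{\lambda_0}=\begin{bmatrix}1&\frac{a_3}{2}&\frac{a_2-\lambda_0}{2}\\[2pt] \frac{a_3}{2}&\lambda_0&\frac{a_1}{2}\\[2pt] \frac{a_2-\lambda_0}{2}&\frac{a_1}{2}&a_0\end{bmatrix}$$ is positive semi-definite. Likewise, $f$ is positive definite if and only if $\lambda_0$ is a real number and $\mathbf{M}_{\lambda_0}$ is positive definite.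
   Context: A binary form $f(x,y)$ with real coefficients is positive definite (resp. positive semi-definite) if $f(x,y)>0$ (resp. $f(x,y)\ge 0$) for all real $x,y$ not both zero. The quantity $\lambda_0$ is real exactly when $3b_1+4b_2^2\ge 0$. *)

theory Defs
  imports "HOL-Analysis.Analysis"
begin

definition quartic_form :: "real \<Rightarrow> real \<Rightarrow> real \<Rightarrow> real \<Rightarrow> real \<Rightarrow> real \<Rightarrow> real" where
  "quartic_form a0 a1 a2 a3 x y =
     x^4 + a3 * x^3 * y + a2 * x^2 * y^2 + a1 * x * y^3 + a0 * y^4"

definition psd_form :: "(real \<Rightarrow> real \<Rightarrow> real) \<Rightarrow> bool" where
  "psd_form f \<longleftrightarrow> (\<forall>x y. (x \<noteq> 0 \<or> y \<noteq> 0) \<longrightarrow> f x y \<ge> 0)"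

definition pd_form :: "(real \<Rightarrow> real \<Rightarrow> real) \<Rightarrow> bool" where
  "pd_form f \<longleftrightarrow> (\<forall>x y. (x \<noteq> 0 \<or> y \<noteq> 0) \<longrightarrow> f x y > 0)"

definition psd_matrix :: "real^'n^'n \<Rightarrow> bool" where
  "psd_matrix M \<longleftrightarrow> M = transpose M \<and> (\<forall>v. v \<bullet> (M *v v) \<ge> 0)"

definition pd_matrix :: "real^'n^'n \<Rightarrow> bool" where
  "pd_matrix M \<longleftrightarrow> M = transpose M \<and> (\<forall>v. v \<noteq> 0 \<longrightarrow> v \<bullet> (M *v v) > 0)"

definition b1 :: "real \<Rightarrow> real \<Rightarrow> real \<Rightarrow> real \<Rightarrow> real" where
  "b1 a0 a1 a2 a3 = (4 * a0 - a2^2 - a1 * a3) / 4"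

definition b2 :: "real \<Rightarrow> real" where
  "b2 a2 = a2 / 2"

text \<open>lambda_0 (meaningful only when 3 b1 + 4 b2^2 \<ge> 0, i.e. when it is real).\<close>
definition lambda0 :: "real \<Rightarrow> real \<Rightarrow> real \<Rightarrow> real \<Rightarrow> real" where
  "lambda0 a0 a1 a2 a3 =
     (4 * b2 a2 + 2 * sqrt (3 * b1 a0 a1 a2 a3 + 4 * (b2 a2)^2)) / 3"

definition M_lambda :: "real \<Rightarrow> real \<Rightarrow> real \<Rightarrow> real \<Rightarrow> real \<Rightarrow> real^3^3" where
  "M_lambda a0 a1 a2 a3 l =
     vector [vector [1, a3/2, (a2 - l)/2],
             vector [a3/2, l, a1/2],
             vector [(a2 - l)/2, a1/2, a0]]"

end

theory Submission imports Defs begin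

lemma quad_nonneg:
  fixes A B C x y :: real
  assumes "A \<ge> 0" "C \<ge> 0" "B^2 \<le> A*C"
  shows "A*x^2 + 2*B*x*y + C*y^2 \<ge> 0"
proof (cases "A > 0")
  case True
  have "A*(A*x^2 + 2*B*x*y + C*y^2) = (A*x + B*y)^2 + (A*C - B^2)*y^2"
    by (simp add: algebra_simps power2_eq_square)
  also have "\<dots> \<ge> 0" using assms by simp
  finally show ?thesis using True by (simp add: zero_le_mult_iff)
next
  case False
  then have "A = 0" using assms by simp
  then have "B = 0" using assms by simp
  then show ?thesis using \<open>A = 0\<close> assms by simp
qed

lemma quad_pos:
  fixes A B C x y :: real
  assumes "A > 0" "B^2 < A*C" "x \<noteq> 0 \<or> y \<noteq> 0"
  shows "A*x^2 + 2*B*x*y + C*y^2 > 0"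
proof -
  have e: "A*(A*x^2 + 2*B*x*y + C*y^2) = (A*x + B*y)^2 + (A*C - B^2)*y^2"
    by (simp add: algebra_simps power2_eq_square)
  have "(A*x + B*y)^2 + (A*C - B^2)*y^2 > 0"
  proof (cases "y = 0")
    case True
    then have "x \<noteq> 0" using assms by simp
    then show ?thesis using True assms by simp
  next
    case False
    then have "(A*C - B^2)*y^2 > 0" using assms by simp
    moreover have "(A*x + B*y)^2 \<ge> 0" by simp
    ultimately show ?thesis by linarith
  qed
  then have "0 < A*(A*x^2 + 2*B*x*y + C*y^2)" using e by simp
  then show ?thesis using assms(1) zero_less_mult_pos by blast
qed

lemma no_neg_lin:
  fixes p q :: real
  assumes "p \<ge> 0" "\<And>x. x^4 + p*x^2 + q*x \<ge> 0"
  shows "q = 0"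
proof (rule ccontr)
  assume q: "q \<noteq> 0"
  define k where "k = 1 + p + q^2"
  have k1: "k \<ge> 1" using assms(1) by (simp add: k_def)
  have "(-q/k)^4 + p*(-q/k)^2 + q*(-q/k) = (q^2/k) * (q^2/k^3 + p/k - 1)"
    using k1 by (simp add: field_simps power2_eq_square power3_eq_cube power4_eq_xxxx)
  moreover have "q^2/k > 0" using q k1 by simp
  moreover have "q^2/k^3 + p/k - 1 < 0"
  proof -
    have "q^2/k^3 \<le> q^2/k"
    proof (rule divide_left_mono)
      have "k*1 \<le> k*(k*k)" using k1 by (intro mult_left_mono) (use k1 in \<open>auto intro: order_trans[OF k1] simp: mult_le_cancel_left1\<close>)
      then show "k \<le> k^3" by (simp add: power3_eq_cube)
    qed (use k1 in auto)
    moreover have "(q^2 + p)/k < 1" using k1 by (simp add: k_def)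
    ultimately show ?thesis by (simp add: add_divide_distrib)
  qed
  ultimately have "(-q/k)^4 + p*(-q/k)^2 + q*(-q/k) < 0"
    using mult_pos_neg[of "q^2/k" "q^2/k^3 + p/k - 1"] by linarith
  with assms(2)[of "-q/k"] show False by simp
qed

lemma key:
  fixes a0 a1 a2 a3 :: real
  assumes F: "\<And>t. quartic_form a0 a1 a2 a3 t 1 \<ge> 0"
  defines "D \<equiv> 3 * b1 a0 a1 a2 a3 + 4 * (b2 a2)^2"
    and "c11 \<equiv> lambda0 a0 a1 a2 a3 - a3^2/4"
    and "c12 \<equiv> a1/2 - a3*(a2-lambda0 a0 a1 a2 a3)/4"
    and "c22 \<equiv> a0 - (a2-lambda0 a0 a1 a2 a3)^2/4"
  shows "D \<ge> 0 \<and> c11 \<ge> 0 \<and> c22 \<ge> 0 \<and> c12^2 \<le> c11*c22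
     \<and> ((\<forall>t. quartic_form a0 a1 a2 a3 t 1 > 0) \<longrightarrow> c11 > 0 \<and> c12^2 < c11*c22)"
proof -
  define l where "l = lambda0 a0 a1 a2 a3"
  have c11_def: "c11 = l - a3^2/4" by (simp add: c11_def l_def)
  have c12_def: "c12 = a1/2 - a3*(a2-l)/4" by (simp add: c12_def l_def)
  have c22_def: "c22 = a0 - (a2-l)^2/4" by (simp add: c22_def l_def)
  define f where "f t = quartic_form a0 a1 a2 a3 t 1" for t
  define p where "p = a2 - 3*a3^2/8"
  define q where "q = a1 - a2*a3/2 + a3^3/8"
  define r where "r = f (-a3/4)"
  have shift: "f (-a3/4 + u) = u^4 + p*u^2 + q*u + r" for u
    unfolding f_def r_def p_def q_def quartic_form_def
    by (simp add: field_simps power2_eq_square power3_eq_cube power4_eq_xxxx)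
  have r0: "r \<ge> 0" using F by (simp add: r_def f_def)
  have Deq: "4*D = 12*r + p^2"
    unfolding D_def r_def f_def p_def b1_def b2_def quartic_form_def
    by (simp add: field_simps power2_eq_square power3_eq_cube power4_eq_xxxx)
  have D0: "D \<ge> 0" using Deq r0 zero_le_power2[of p] by linarith
  define S where "S = 2 * sqrt D"
  have S0: "S \<ge> 0" using D0 by (simp add: S_def)
  have S2: "S^2 = 12*r + p^2" using Deq D0 by (simp add: S_def power_mult_distrib)
  have S2a: "S^2 = 12*a0 + a2^2 - 3*a1*a3" using S2
    unfolding r_def f_def p_def quartic_form_def
    by (simp add: field_simps power2_eq_square power3_eq_cube power4_eq_xxxx)
  have l_eq: "l = (2*a2 + S)/3" using D0 by (simp add: l_def lambda0_def b2_def S_def D_def)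
  have Sp: "S \<ge> \<bar>p\<bar>"
  proof -
    have "\<bar>p\<bar>^2 \<le> S^2" using S2 r0 by simp
    then show ?thesis using S0 power2_le_imp_le by blast
  qed
  have pr: "p \<ge> 0 \<or> p^2 \<le> 4*r"
  proof (cases "p \<ge> 0")
    case False
    define u where "u = sqrt (-p/2)"
    have u2: "u^2 = -p/2" using False by (simp add: u_def)
    have "f (-a3/4 + u) + f (-a3/4 + (-u)) = 2*(u^4 + p*u^2 + r)"
      unfolding shift by (simp add: algebra_simps)
    also have "u^4 = (u^2)^2" by simp
    finally have "f (-a3/4 + u) + f (-a3/4 + (-u)) = 2*((-p/2)^2 + p*(-p/2) + r)" using u2 by simp
    moreover have "f (-a3/4 + u) + f (-a3/4 + (-u)) \<ge> 0" using F by (simp add: f_def add_nonneg_nonneg)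
    ultimately show ?thesis by (simp add: power2_eq_square algebra_simps)
  qed simp
  define lp where "lp = l - a3^2/4"
  define m where "m = lp - p"
  have m3: "3*m = S - p" by (simp add: m_def lp_def l_eq p_def field_simps)
  have lp3: "3*lp = 2*p + S" by (simp add: lp_def l_eq p_def field_simps)
  have m0: "m \<ge> 0" using m3 Sp by linarith
  have lp0: "lp \<ge> 0"
  proof (cases "p \<ge> 0")
    case False
    then have "p^2 \<le> 4*r" using pr by simp
    then have "(-2*p)^2 \<le> S^2" using S2 by (simp add: power2_eq_square)
    then have "-2*p \<le> S" using S0 power2_le_imp_le by blast
    then show ?thesis using lp3 by linarith
  qed (use lp3 S0 in linarith)
  have r_eq: "4*r = 3*m^2 + 2*m*p"
  proof -
    have "S = 3*m + p" using m3 by simp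
    then have "(3*m+p)^2 = 12*r + p^2" using S2 by simp
    then show ?thesis by (simp add: power2_eq_square algebra_simps)
  qed
  have lpm: "lp = m + p" by (simp add: m_def)
  define w where "w = sqrt (m/2)"
  have w0: "w \<ge> 0" using m0 by (simp add: w_def)
  have w2: "w^2 = m/2" using m0 by (simp add: w_def)
  have fw: "f (-a3/4 + e*w) = m*lp + e*q*w" if "e^2 = 1" for e
  proof -
    have "f (-a3/4 + e*w) = (e^2)^2*(w^2)^2 + p*e^2*w^2 + e*q*w + r"
      unfolding shift by (simp add: power_mult_distrib algebra_simps power4_eq_xxxx power2_eq_square)
    also have "\<dots> = (m/2)^2 + p*(m/2) + e*q*w + r" by (simp only: that w2) simp
    also have "\<dots> = m*lp + e*q*w" using r_eq unfolding lpm
      by (simp add: field_simps power2_eq_square)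
    finally show ?thesis .
  qed
  have fp: "f (-a3/4 + w) = m*lp + q*w" using fw[of 1] by simp
  have fm: "f (-a3/4 - w) = m*lp - q*w" using fw[of "-1"] by simp
  have qw: "\<bar>q\<bar>*w \<le> m*lp"
  proof -
    have "q*w \<le> m*lp" "-(q*w) \<le> m*lp" using F[of "-a3/4 + w"] F[of "-a3/4 - w"] fp fm
      by (simp_all add: f_def)
    then have "\<bar>q*w\<bar> \<le> m*lp" by (simp add: abs_le_iff)
    then show ?thesis using w0 by (simp add: abs_mult)
  qed
  have det: "c11*c22 - c12^2 = (2*m*lp^2 - q^2)/4"
  proof -
    have a0e: "a0 = (S^2 - a2^2 + 3*a1*a3)/12" using S2a by simp
    show ?thesis unfolding c11_def c22_def c12_def m_def lp_def q_def p_def a0e l_eq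
      by (simp add: field_simps power2_eq_square power3_eq_cube)
  qed
  have c11e: "c11 = lp" by (simp add: c11_def lp_def)
  have Pw: "f (-a3/4 + w) = c11*(-a3/4 + w)^2 + 2*c12*(-a3/4 + w) + c22"
  proof -
    have gen: "f x = (x^2 + a3/2*x + (a2-l)/2)^2 + c11*x^2 + 2*c12*x + c22" for x
      unfolding f_def quartic_form_def c11_def c12_def c22_def
      by (simp add: field_simps power2_eq_square power3_eq_cube power4_eq_xxxx)
    have "(-a3/4 + w)^2 + a3/2*(-a3/4 + w) + (a2-l)/2 = 0"
      using w2 unfolding m_def lp_def p_def by (simp add: field_simps power2_eq_square)
    then show ?thesis using gen[of "-a3/4 + w"] by simp
  qed
  have detp: "q^2 \<le> 2*m*lp^2"
  proof (cases "m > 0")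
    case True
    have "(\<bar>q\<bar>*w)^2 \<le> (m*lp)^2" using qw w0 by (intro power_mono) auto
    then have "q^2*(m/2) \<le> m^2*lp^2" using w2 by (simp add: power_mult_distrib)
    then have "m*(q^2) \<le> m*(2*m*lp^2)" by (simp add: power2_eq_square algebra_simps)
    then show ?thesis using True by simp
  next
    case False
    then have m00: "m = 0" using m0 by simp
    then have "r = 0" using r_eq by simp
    have "p \<ge> 0" using m3 m00 S0 by simp
    have "q = 0"
    proof (rule no_neg_lin[OF \<open>p \<ge> 0\<close>])
      fix u show "u^4 + p*u^2 + q*u \<ge> 0" using F[of "-a3/4 + u"] shift[of u] \<open>r = 0\<close>
        by (simp add: f_def)
    qed
    then show ?thesis using m00 by simp
  qed
  have s0: "c12^2 \<le> c11*c22" using det detp by simp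
  have c11p: "c11 \<ge> 0" using c11e lp0 by simp
  have c22p: "c22 \<ge> 0"
  proof (cases "c11 > 0")
    case True
    have "c11*c22 \<ge> 0" using s0 zero_le_power2[of c12] by linarith
    then show ?thesis using True by (simp add: zero_le_mult_iff)
  next
    case False
    then have "c11 = 0" using c11p by simp
    then have "c12 = 0" using s0 by simp
    then show ?thesis using Pw F[of "-a3/4 + w"] \<open>c11 = 0\<close> by (simp add: f_def)
  qed
  have strict: "c11 > 0 \<and> c12^2 < c11*c22" if Fs: "\<forall>t. quartic_form a0 a1 a2 a3 t 1 > 0"
  proof -
    have "r > 0" using Fs by (simp add: r_def f_def)
    then have "S^2 > p^2" using S2 by simp
    then have "\<bar>p\<bar>^2 < S^2" by simp
    then have "S > \<bar>p\<bar>" using S0 power_less_imp_less_base by blast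
    then have mp: "m > 0" using m3 by linarith
    then have wp: "w > 0" by (simp add: w_def)
    have qw': "\<bar>q\<bar>*w < m*lp"
    proof -
      have "q*w < m*lp" "-(q*w) < m*lp" using Fs[rule_format, of "-a3/4 + w"] Fs[rule_format, of "-a3/4 - w"] fp fm
        by (simp_all add: f_def)
      then have "\<bar>q*w\<bar> < m*lp" by (simp add: abs_less_iff)
      then show ?thesis using w0 by (simp add: abs_mult)
    qed
    moreover have "\<bar>q\<bar>*w \<ge> 0" using w0 by simp
    ultimately have "m*lp > 0" by linarith
    then have lpp: "lp > 0" using mp by (simp add: zero_less_mult_iff)
    have "(\<bar>q\<bar>*w)^2 < (m*lp)^2" using qw' wp by (intro power_strict_mono) auto
    then have "q^2*(m/2) < m^2*lp^2" using w2 by (simp add: power_mult_distrib)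
    then have "m*(q^2) < m*(2*m*lp^2)" by (simp add: power2_eq_square algebra_simps)
    then have "q^2 < 2*m*lp^2" using mp by simp
    then show ?thesis using det c11e lpp by simp
  qed
  show ?thesis using D0 c11p c22p s0 strict by blast
qed


lemma M_quad: "v \<bullet> (M_lambda a0 a1 a2 a3 l *v v) = (v$1)^2 + a3 * v$1 * v$2 + (a2-l) * v$1 * v$3 + l * (v$2)^2 + a1 * v$2 * v$3 + a0 * (v$3)^2"
  unfolding M_lambda_def inner_vec_def matrix_vector_mult_def
  by (simp add: sum_3 algebra_simps power2_eq_square)

lemma M_sym: "M_lambda a0 a1 a2 a3 l = transpose (M_lambda a0 a1 a2 a3 l)"
  by (simp add: vec_eq_iff forall_3 transpose_def M_lambda_def)

lemma f_via_M: "quartic_form a0 a1 a2 a3 x y =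
   (vector [x^2, x*y, y^2] :: real^3) \<bullet> (M_lambda a0 a1 a2 a3 l *v vector [x^2, x*y, y^2])"
  unfolding M_quad quartic_form_def
  by (simp add: algebra_simps power2_eq_square power3_eq_cube power4_eq_xxxx)

lemma vec_nz: "(vector [x^2, x*y, y^2] :: real^3) \<noteq> 0" if "x \<noteq> 0 \<or> y \<noteq> 0"
proof
  assume "(vector [x^2, x*y, y^2] :: real^3) = 0"
  then have "(vector [x^2, x*y, y^2] :: real^3)$1 = 0" "(vector [x^2, x*y, y^2] :: real^3)$3 = 0" by simp_all
  then show False using that by simp
qed

lemma decomp: "v \<bullet> (M_lambda a0 a1 a2 a3 l *v v) = (v$1 + a3/2 * v$2 + (a2-l)/2 * v$3)^2
   + (l - a3^2/4) * (v$2)^2 + 2 * (a1/2 - a3*(a2-l)/4) * v$2 * v$3 + (a0 - (a2-l)^2/4) * (v$3)^2"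
  unfolding M_quad by (simp add: field_simps power2_eq_square)

theorem theorem1:
  fixes a0 a1 a2 a3 :: real
  shows "(psd_form (quartic_form a0 a1 a2 a3) \<longleftrightarrow>
            (3 * b1 a0 a1 a2 a3 + 4 * (b2 a2)^2 \<ge> 0 \<and>
             psd_matrix (M_lambda a0 a1 a2 a3 (lambda0 a0 a1 a2 a3))))
       \<and> (pd_form (quartic_form a0 a1 a2 a3) \<longleftrightarrow>
            (3 * b1 a0 a1 a2 a3 + 4 * (b2 a2)^2 \<ge> 0 \<and>
             pd_matrix (M_lambda a0 a1 a2 a3 (lambda0 a0 a1 a2 a3))))"
proof -
  define l where "l = lambda0 a0 a1 a2 a3"
  define M where "M = M_lambda a0 a1 a2 a3 l"
  define c11 where "c11 = l - a3^2/4"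
  define c12 where "c12 = a1/2 - a3*(a2-l)/4"
  define c22 where "c22 = a0 - (a2-l)^2/4"
  have dec: "v \<bullet> (M *v v) = (v$1 + a3/2 * v$2 + (a2-l)/2 * v$3)^2 + (c11 * (v$2)^2 + 2 * c12 * v$2 * v$3 + c22 * (v$3)^2)" for v
    unfolding M_def c11_def c12_def c22_def decomp by simp
  have psd1: "psd_form (quartic_form a0 a1 a2 a3) \<Longrightarrow> 3 * b1 a0 a1 a2 a3 + 4 * (b2 a2)^2 \<ge> 0 \<and> psd_matrix M"
  proof -
    assume P: "psd_form (quartic_form a0 a1 a2 a3)"
    have F: "quartic_form a0 a1 a2 a3 t 1 \<ge> 0" for t using P by (simp add: psd_form_def)
    have K: "3 * b1 a0 a1 a2 a3 + 4 * (b2 a2)^2 \<ge> 0 \<and> c11 \<ge> 0 \<and> c22 \<ge> 0 \<and> c12^2 \<le> c11*c22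
     \<and> ((\<forall>t. quartic_form a0 a1 a2 a3 t 1 > 0) \<longrightarrow> c11 > 0 \<and> c12^2 < c11*c22)"
      using key[OF F] unfolding c11_def c12_def c22_def l_def by blast
    have "v \<bullet> (M *v v) \<ge> 0" for v
      unfolding dec using quad_nonneg[of c11 c22 c12 "v$2" "v$3"] K by (simp add: add_nonneg_nonneg)
    then show ?thesis using K M_sym unfolding psd_matrix_def M_def by blast
  qed
  have psd2: "psd_matrix M \<Longrightarrow> psd_form (quartic_form a0 a1 a2 a3)"
    unfolding psd_matrix_def psd_form_def M_def by (simp add: f_via_M[of _ _ _ _ _ _ l])
  have pd1: "pd_form (quartic_form a0 a1 a2 a3) \<Longrightarrow> 3 * b1 a0 a1 a2 a3 + 4 * (b2 a2)^2 \<ge> 0 \<and> pd_matrix M"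
  proof -
    assume P: "pd_form (quartic_form a0 a1 a2 a3)"
    have Fs: "\<forall>t. quartic_form a0 a1 a2 a3 t 1 > 0" using P by (simp add: pd_form_def)
    then have F: "quartic_form a0 a1 a2 a3 t 1 \<ge> 0" for t by (simp add: less_imp_le)
    have K: "3 * b1 a0 a1 a2 a3 + 4 * (b2 a2)^2 \<ge> 0 \<and> c11 \<ge> 0 \<and> c22 \<ge> 0 \<and> c12^2 \<le> c11*c22
     \<and> ((\<forall>t. quartic_form a0 a1 a2 a3 t 1 > 0) \<longrightarrow> c11 > 0 \<and> c12^2 < c11*c22)"
      using key[OF F] unfolding c11_def c12_def c22_def l_def by blast
    have "v \<bullet> (M *v v) > 0" if "v \<noteq> 0" for v
    proof (cases "v$2 \<noteq> 0 \<or> v$3 \<noteq> 0")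
      case True
      then have "c11 * (v$2)^2 + 2 * c12 * v$2 * v$3 + c22 * (v$3)^2 > 0"
        using quad_pos[of c11 c12 c22 "v$2" "v$3"] K Fs by blast
      then show ?thesis unfolding dec by (simp add: add_nonneg_pos)
    next
      case False
      then have "v$1 \<noteq> 0" using that by (auto simp: vec_eq_iff forall_3)
      then show ?thesis unfolding dec using False by simp
    qed
    then show ?thesis using K M_sym unfolding pd_matrix_def M_def by blast
  qed
  have pd2: "pd_matrix M \<Longrightarrow> pd_form (quartic_form a0 a1 a2 a3)"
    unfolding pd_matrix_def pd_form_def M_def using vec_nz by (simp add: f_via_M[of _ _ _ _ _ _ l])
  have pd_psd: "pd_form (quartic_form a0 a1 a2 a3) \<Longrightarrow> psd_form (quartic_form a0 a1 a2 a3)"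
    unfolding pd_form_def psd_form_def by (simp add: less_imp_le)
  show ?thesis using psd1 psd2 pd1 pd2 unfolding M_def l_def by blast
qed

end
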